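(* Let $U$ be a single-qubit unitary and let $U'$ be a qutrit unitary emulating $U$. Suppose we are given the two-qutrit $\ket{2}$-controlled $U'$ gate. Then there is a three-qutrit circuit consisting of this given gate together with qutrit Clifford gates that emulates the three-qubit doubly-controlled gate $\mathrm{CC}U$ (which applies $U$ to the third qubit iff the first two qubits are both $\ket{1}$); in particular its non-Clifford cost equals that of the given $\ket{2}$-controlled $U'$ gate.
   Context: A qutrit is $\mathbb{C}^3$ with basis $\ket{0},\ket{1},\ket{2}$; $\omega=e^{2\pi i/3}$. Qutrit Clifford gates are those generated (up to global phase) by $S=\mathrm{diag}(1,1,\omega)$, $H=\frac{1}{\sqrt3}\begin{pmatrix}1&1&1\\1&\omega&\bar\omega\\1&\bar\omega&\omega\end{pmatrix}$ and $\mathrm{CX}:\ket{i,j}\mapsto\ket{i,(i+j)\bmod3}$. A qutrit unitary emulates a qubit unitary $U$ if, identifying qubit basis states $\ket{x}$, $x\in\{0,1\}^n$, with the equally labelled qutrit basis states, it maps each $\ket{x}$ to $U\ket{x}$. For a qutrit unitary $V$, the $\ket{2}$-controlled $V$ is the unitary acting as $\ket{0}\otimes\ket{\psi}\mapsto\ket{0}\otimes\ket{\psi}$, $\ket{1}\otimes\ket{\psi}\mapsto\ket{1}\otimes\ket{\psi}$, $\ket{2}\otimes\ket{\psi}\mapsto\ket{2}\otimes V\ket{\psi}$. The non-Clifford cost of a circuit is its number of non-Clifford gates. *)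

theory Defs
  imports Complex_Main "Jordan_Normal_Form.Matrix"
begin

(* Conventions: n-qubit/n-qutrit basis states are encoded big-endian:
   |x_0 ... x_{n-1}> has index sum_k x_k * d^(n-1-k)  (d = 2 or 3).
   Operators are complex matrices (column j = image of basis state j). *)

definition adj :: "complex mat \<Rightarrow> complex mat" where
  "adj M = mat (dim_col M) (dim_row M) (\<lambda>(i,j). cnj (M $$ (j,i)))"

definition unitary_mat :: "nat \<Rightarrow> complex mat \<Rightarrow> bool" where
  "unitary_mat n M \<longleftrightarrow> M \<in> carrier_mat n n \<and> M * adj M = 1\<^sub>m n \<and> adj M * M = 1\<^sub>m n"

(* qubit basis index i < 2^n  \<mapsto>  equally labelled qutrit basis index *)
definition q2t :: "nat \<Rightarrow> nat \<Rightarrow> nat" where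
  "q2t n i = (\<Sum>k<n. ((i div 2^k) mod 2) * 3^k)"

(* W (on n qutrits) emulates V (on n qubits): W |x> = V |x> for all qubit basis states x *)
definition emulates :: "nat \<Rightarrow> complex mat \<Rightarrow> complex mat \<Rightarrow> bool" where
  "emulates n W V \<longleftrightarrow> W \<in> carrier_mat (3^n) (3^n) \<and> V \<in> carrier_mat (2^n) (2^n) \<and>
     (\<forall>i < 2^n. \<forall>r < 3^n. W $$ (r, q2t n i) = (\<Sum>j<2^n. if q2t n j = r then V $$ (j, i) else 0))"

definition omega :: complex where "omega = cis (2 * pi / 3)"

definition S_gate :: "complex mat" where
  "S_gate = mat 3 3 (\<lambda>(i,j). if i = j then (if i = 2 then omega else 1) else 0)"

definition H_gate :: "complex mat" where
  "H_gate = mat 3 3 (\<lambda>(i,j). omega ^ (i * j) / complex_of_real (sqrt 3))"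

(* CX |i,j> = |i, (i+j) mod 3>, index of |a,b> is 3a+b *)
definition CX_gate :: "complex mat" where
  "CX_gate = mat 9 9 (\<lambda>(r,c). if r div 3 = c div 3 \<and> r mod 3 = (c div 3 + c mod 3) mod 3 then 1 else 0)"

(* |2>-controlled V: control is the first qutrit *)
definition ctrl2 :: "complex mat \<Rightarrow> complex mat" where
  "ctrl2 V = mat 9 9 (\<lambda>(r,c). if r div 3 = c div 3 then
      (if c div 3 = 2 then V $$ (r mod 3, c mod 3) else (if r mod 3 = c mod 3 then 1 else 0))
     else 0)"

definition trit :: "nat \<Rightarrow> nat \<Rightarrow> nat" where
  "trit r w = (r div 3^(2 - w)) mod 3"

definition place1 :: "complex mat \<Rightarrow> nat \<Rightarrow> complex mat" where
  "place1 V p = mat 27 27 (\<lambda>(r,c).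
     if (\<forall>w<3. w \<noteq> p \<longrightarrow> trit r w = trit c w) then V $$ (trit r p, trit c p) else 0)"

(* two-qutrit gate G applied to ordered wires (p,q) (p = first tensor factor of G) *)
definition place2 :: "complex mat \<Rightarrow> nat \<Rightarrow> nat \<Rightarrow> complex mat" where
  "place2 G p q = mat 27 27 (\<lambda>(r,c).
     if (\<forall>w<3. w \<noteq> p \<and> w \<noteq> q \<longrightarrow> trit r w = trit c w)
     then G $$ (3 * trit r p + trit r q, 3 * trit c p + trit c q) else 0)"

inductive clifford3 :: "complex mat \<Rightarrow> bool" where
  id: "clifford3 (1\<^sub>m 27)"
| S: "\<lbrakk>clifford3 M; p < 3\<rbrakk> \<Longrightarrow> clifford3 (place1 S_gate p * M)"
| H: "\<lbrakk>clifford3 M; p < 3\<rbrakk> \<Longrightarrow> clifford3 (place1 H_gate p * M)"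
| CX: "\<lbrakk>clifford3 M; p < 3; q < 3; p \<noteq> q\<rbrakk> \<Longrightarrow> clifford3 (place2 CX_gate p q * M)"
| phase: "\<lbrakk>clifford3 M; cmod z = 1\<rbrakk> \<Longrightarrow> clifford3 (z \<cdot>\<^sub>m M)"

(* three-qubit doubly-controlled U: controls qubits 0,1, target qubit 2 *)
definition CC_gate :: "complex mat \<Rightarrow> complex mat" where
  "CC_gate U = mat 8 8 (\<lambda>(r,c). if r div 2 = c div 2 then
      (if c div 2 = 3 then U $$ (r mod 2, c mod 2) else (if r mod 2 = c mod 2 then 1 else 0))
     else 0)"

end

theory Submission imports Defs begin

definition fP :: "nat \<Rightarrow> nat" where
  "fP c = 9*(c div 9) + 3*((c div 9 + c div 3 mod 3) mod 3) + c mod 3"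

lemma all3: "(\<forall>w<3. P (w::nat)) \<longleftrightarrow> P 0 \<and> P 1 \<and> P 2"
  by (auto simp: less_Suc_eq numeral_3_eq_3 numeral_2_eq_2)

lemma dec27: assumes "r < (27::nat)"
  obtains a b d where "r = 9*a+3*b+d" "a<3" "b<3" "d<3"
proof
  have 1: "r div 3 = 3*(r div 3 div 3) + r div 3 mod 3" by simp
  have 2: "r div 3 div 3 = r div 9" using div_mult2_eq[of r 3 3] by simp
  have 3: "r = 3*(r div 3) + r mod 3" by simp
  show "r = 9*(r div 9) + 3*(r div 3 mod 3) + r mod 3" using 1 2 3 by linarith
qed (use assms in auto)

lemma digs: assumes "a<3" "b<3" "d<(3::nat)"
  shows "(9*a+3*b+d) div 9 = a" "(9*a+3*b+d) div 3 mod 3 = b" "(9*a+3*b+d) mod 3 = d"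
   "(9*a+3*b+d) div 9 mod 3 = a" "(3*a+b) div 3 = a" "(3*a+b) mod 3 = b"
proof -
  show 1: "(9*a+3*b+d) div 9 = a" by (rule div_nat_eqI) (use assms in simp_all)
  have 2: "(9*a+3*b+d) div 3 = 3*a+b" by (rule div_nat_eqI) (use assms in simp_all)
  show 5: "(3*a+b) div 3 = a" by (rule div_nat_eqI) (use assms in simp_all)
  show 6: "(3*a+b) mod 3 = b" by (rule mod_nat_eqI) (use assms in simp_all)
  show "(9*a+3*b+d) div 3 mod 3 = b" unfolding 2 6 ..
  show "(9*a+3*b+d) mod 3 = d" by (rule mod_nat_eqI) (use assms in simp_all)
  show "(9*a+3*b+d) div 9 mod 3 = a" unfolding 1 using assms by simp
qed

lemma inj27: assumes "a<3" "b<3" "d<(3::nat)" "a'<3" "b'<3" "d'<(3::nat)"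
  shows "(9*a+3*b+d = 9*a'+3*b'+d') \<longleftrightarrow> a=a' \<and> b=b' \<and> d=d'"
  using assms digs(1,2,3)[OF assms(1-3)] digs(1,2,3)[OF assms(4-6)] by metis

lemma P_entry:
  assumes "r < 27" "c < 27"
  shows "place2 CX_gate 0 1 $$ (r,c) = (if r = fP c then 1 else 0)"
proof -
  obtain a b d where r: "r = 9*a+3*b+d" "a<3" "b<3" "d<3" using dec27 assms(1) by blast
  obtain a' b' d' where c: "c = 9*a'+3*b'+d'" "a'<3" "b'<3" "d'<3" using dec27 assms(2) by blast
  have m: "(a'+b') mod 3 < 3" by simp
  have 1: "place2 CX_gate 0 1 $$ (r,c) = (if r mod 3 = c mod 3 then CX_gate $$ (3*(r div 9 mod 3) + r div 3 mod 3, 3*(c div 9 mod 3)+ c div 3 mod 3) else 0)"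
    using assms by (simp add: place2_def trit_def all3)
  have 2: "3*(r div 9 mod 3) + r div 3 mod 3 = 3*a+b" "3*(c div 9 mod 3) + c div 3 mod 3 = 3*a'+b'"
    "r mod 3 = d" "c mod 3 = d'"
    unfolding r(1) c(1) digs(4,2,3)[OF r(2-4)] digs(4,2,3)[OF c(2-4)] by simp_all
  have 3: "CX_gate $$ (3*a+b, 3*a'+b') = (if a = a' \<and> b = (a'+b') mod 3 then 1 else 0)"
    using r(2-4) c(2-4) by (simp add: CX_gate_def digs(5,6)[of _ _ 0])
  have 4: "fP c = 9*a'+3*((a'+b') mod 3)+d'" unfolding fP_def using digs[OF c(2-4)] c(1) by simp
  have 5: "(r = fP c) \<longleftrightarrow> a=a' \<and> b = (a'+b') mod 3 \<and> d=d'" unfolding 4 r(1) by (rule inj27[OF r(2-4) c(2) m c(4)])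
  show ?thesis unfolding 1 2 3 5 by simp
qed


definition gP :: "nat \<Rightarrow> nat" where
  "gP r = 9*(r div 9) + 3*((r div 3 mod 3 + 2*(r div 9)) mod 3) + r mod 3"

lemma fP_lt: "c < 27 \<Longrightarrow> fP c < 27"
proof -
  assume "c < 27"
  then have "c div 9 < 3" by simp
  moreover have "(c div 9 + c div 3 mod 3) mod 3 < 3" "c mod 3 < 3" by simp_all
  ultimately show ?thesis unfolding fP_def by linarith
qed

lemma gP_lt: "c < 27 \<Longrightarrow> gP c < 27"
proof -
  assume "c < 27"
  then have "c div 9 < 3" by simp
  moreover have "(c div 3 mod 3 + 2*(c div 9)) mod 3 < 3" "c mod 3 < 3" by simp_all
  ultimately show ?thesis unfolding gP_def by linarith
qed

lemma three: "a < (3::nat) \<Longrightarrow> a = 0 \<or> a = 1 \<or> a = 2" by linarith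

lemma small_mod: "a<3 \<Longrightarrow> b<3 \<Longrightarrow> b'<(3::nat) \<Longrightarrow> (b = (a+b') mod 3) \<longleftrightarrow> (b' = (b+2*a) mod 3)"
  apply (drule three)+
  apply (elim disjE)
  apply simp_all
  done

lemma fP_gP:
  assumes "r < 27" "k < 27"
  shows "(r = fP k) \<longleftrightarrow> (k = gP r)"
proof -
  obtain a b d where r: "r = 9*a+3*b+d" "a<3" "b<3" "d<3" using dec27 assms(1) by blast
  obtain a' b' d' where c: "k = 9*a'+3*b'+d'" "a'<3" "b'<3" "d'<3" using dec27 assms(2) by blast
  have m: "(a'+b') mod 3 < 3" "(b+2*a) mod 3 < 3" by simp_all
  have 4: "fP k = 9*a'+3*((a'+b') mod 3)+d'" unfolding fP_def using digs[OF c(2-4)] c(1) by simp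
  have 6: "gP r = 9*a+3*((b+2*a) mod 3)+d" unfolding gP_def using digs[OF r(2-4)] r(1) by simp
  have 5: "(r = fP k) \<longleftrightarrow> a=a' \<and> b = (a'+b') mod 3 \<and> d=d'" unfolding 4 r(1) by (rule inj27[OF r(2-4) c(2) m(1) c(4)])
  have 7: "(k = gP r) \<longleftrightarrow> a'=a \<and> b' = (b+2*a) mod 3 \<and> d'=d" unfolding 6 c(1) by (rule inj27[OF c(2-4) r(2) m(2) r(4)])
  have sm: "(b = (a'+b') mod 3) \<longleftrightarrow> (b' = (b+2*a') mod 3)" by (rule small_mod[OF c(2) r(3) c(3)])
  show ?thesis unfolding 5 7
  proof (cases "a = a'")
    case True
    then show "(a = a' \<and> b = (a' + b') mod 3 \<and> d = d') = (a' = a \<and> b' = (b + 2 * a) mod 3 \<and> d' = d)"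
      using sm by (simp only: True) blast
  qed blast
qed

abbreviation PP where "PP \<equiv> place2 CX_gate 0 1"

lemma PP_carrier: "PP \<in> carrier_mat 27 27" unfolding place2_def by simp

lemma PP_left:
  assumes "A \<in> carrier_mat 27 n" "r < 27" "c < n"
  shows "(PP * A) $$ (r,c) = A $$ (gP r, c)"
proof -
  have "(PP * A) $$ (r,c) = (\<Sum>k<27. PP $$ (r,k) * A $$ (k,c))"
    using assms PP_carrier by (simp add: scalar_prod_def atLeast0LessThan)
  also have "\<dots> = (\<Sum>k<27. if k = gP r then A $$ (k,c) else 0)"
  proof (rule sum.cong)
    fix k assume "k \<in> {..<27::nat}"
    then have k: "k < 27" by simp
    show "PP $$ (r,k) * A $$ (k,c) = (if k = gP r then A $$ (k,c) else 0)"
      using P_entry[OF assms(2) k] fP_gP[OF assms(2) k] by simp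
  qed simp
  also have "\<dots> = A $$ (gP r, c)" using gP_lt[OF assms(2)] by simp
  finally show ?thesis .
qed

lemma PP_right:
  assumes "A \<in> carrier_mat n 27" "r < n" "c < 27"
  shows "(A * PP) $$ (r,c) = A $$ (r, fP c)"
proof -
  have "(A * PP) $$ (r,c) = (\<Sum>k<27. A $$ (r,k) * PP $$ (k,c))"
    using assms PP_carrier by (simp add: scalar_prod_def atLeast0LessThan)
  also have "\<dots> = (\<Sum>k<27. if k = fP c then A $$ (r,k) else 0)"
  proof (rule sum.cong)
    fix k assume "k \<in> {..<27::nat}"
    then have k: "k < 27" by simp
    show "A $$ (r,k) * PP $$ (k,c) = (if k = fP c then A $$ (r,k) else 0)"
      using P_entry[OF k assms(3)] by simp
  qed simp
  also have "\<dots> = A $$ (r, fP c)" using fP_lt[OF assms(3)] by simp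
  finally show ?thesis .
qed

lemma q2t3: "q2t 3 i = (i mod 2) + 3*((i div 2) mod 2) + 9*((i div 4) mod 2)"
proof -
  have e: "{..<3::nat} = {0,1,2}" by auto
  show ?thesis unfolding q2t_def e by simp
qed

lemma q2t1: "q2t 1 i = i mod 2"
  by (simp add: q2t_def)

lemma cases27: "r < (27::nat) \<Longrightarrow> r \<in> {0..26}" by auto
lemma cases8: "r < (8::nat) \<Longrightarrow> r \<in> {0..7}" by auto

lemma sum8: "(\<Sum>j<(8::nat). f j) = f 0 + f 1 + f 2 + f 3 + f 4 + f 5 + f 6 + (f 7 :: complex)"
  by (simp add: lessThan_nat_numeral)


lemma en27: "r < (27::nat) \<Longrightarrow> r=0 \<or> r=1 \<or> r=2 \<or> r=3 \<or> r=4 \<or> r=5 \<or> r=6 \<or> r=7 \<or> r=8 \<or> r=9 \<or> r=10 \<or> r=11 \<or> r=12 \<or> r=13 \<or> r=14 \<or> r=15 \<or> r=16 \<or> r=17 \<or> r=18 \<or> r=19 \<or> r=20 \<or> r=21 \<or> r=22 \<or> r=23 \<or> r=24 \<or> r=25 \<or> r=26"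
proof -
  assume "r < 27" hence "r \<in> {..<27}" by simp
  thus ?thesis by (auto simp: lessThan_nat_numeral)
qed

lemma en8: "r < (8::nat) \<Longrightarrow> r=0 \<or> r=1 \<or> r=2 \<or> r=3 \<or> r=4 \<or> r=5 \<or> r=6 \<or> r=7"
proof -
  assume "r < 8" hence "r \<in> {..<8}" by simp
  thus ?thesis by (auto simp: lessThan_nat_numeral)
qed

lemma trit_lt: "trit x w < 3" by (simp add: trit_def)

lemma G_entry:
  assumes "x < 27" "y < 27"
  shows "place2 (ctrl2 V) 1 2 $$ (x,y) = (if x div 9 mod 3 = y div 9 mod 3 \<and> x div 3 mod 3 = y div 3 mod 3 then
     (if y div 3 mod 3 = 2 then V $$ (x mod 3, y mod 3) else if x mod 3 = y mod 3 then 1 else 0) else 0)"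
proof -
  have l: "3 * (z div 3 mod 3) + z mod 3 < 9" for z::nat by linarith
  have d: "(3 * (z div 3 mod 3) + z mod 3) div 3 = z div 3 mod 3" "(3 * (z div 3 mod 3) + z mod 3) mod 3 = z mod 3" for z::nat
    using digs(5,6)[of "z div 3 mod 3" "z mod 3" 0] by simp_all
  have a: "(\<forall>w<3. w \<noteq> 1 \<and> w \<noteq> 2 \<longrightarrow> trit x w = trit y w) \<longleftrightarrow> x div 9 mod 3 = y div 9 mod 3"
    unfolding all3 by (simp add: trit_def)
  have t: "trit z 1 = z div 3 mod 3" "trit z 2 = z mod 3" for z by (simp_all add: trit_def)
  show ?thesis using assms unfolding place2_def ctrl2_def index_mat(1)[OF assms] prod.case a t
      index_mat(1)[OF l[of x] l[of y]] d
    by simp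
qed

lemma W_entry:
  assumes "G \<in> carrier_mat 27 27" "r < 27" "c < 27"
  shows "((PP * PP) * G * PP) $$ (r,c) = G $$ (gP (gP r), fP c)"
proof -
  have eq: "(PP * PP) * G = PP * (PP * G)"
    using assms PP_carrier by (simp add: assoc_mult_mat[of _ 27 27 _ 27 _ 27])
  have "((PP * PP) * G * PP) $$ (r,c) = ((PP * PP) * G) $$ (r, fP c)"
    by (rule PP_right) (use assms PP_carrier in auto)
  also have "\<dots> = (PP * (PP * G)) $$ (r, fP c)" unfolding eq ..
  also have "(PP * (PP * G)) $$ (r, fP c) = (PP * G) $$ (gP r, fP c)"
    by (rule PP_left) (use assms PP_carrier fP_lt in auto)
  also have "\<dots> = G $$ (gP (gP r), fP c)"
    by (rule PP_left) (use assms PP_carrier fP_lt gP_lt in auto)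
  finally show ?thesis .
qed

theorem mainTheorem3:
  fixes U U' :: "complex mat"
  assumes "unitary_mat 2 U"
    and "unitary_mat 3 U'"
    and "emulates 1 U' U"
  shows "\<exists>C1 C2 p q. clifford3 C1 \<and> clifford3 C2 \<and> p < 3 \<and> q < 3 \<and> p \<noteq> q \<and>
           emulates 3 (C2 * place2 (ctrl2 U') p q * C1) (CC_gate U)"
proof -
  have em: "\<And>i r :: nat. i < 2 \<Longrightarrow> r < 3 \<Longrightarrow> U' $$ (r, i mod 2) = (\<Sum>j<2. if j mod 2 = r then U $$ (j, i) else 0)"
    using assms(3) unfolding emulates_def q2t1 by auto
  have u: "U' $$ (0,0) = U $$ (0,0)" "U' $$ (1,0) = U $$ (1,0)" "U' $$ (2,0) = 0"
     "U' $$ (0,1) = U $$ (0,1)" "U' $$ (1,1) = U $$ (1,1)" "U' $$ (2,1) = 0"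
    using em[of 0 0] em[of 0 1] em[of 0 2] em[of 1 0] em[of 1 1] em[of 1 2]
    by (simp_all add: lessThan_nat_numeral)
  have c1: "clifford3 PP"
    using clifford3.CX[OF clifford3.id, of 0 1] PP_carrier by simp
  have c2: "clifford3 (PP * PP)"
    using clifford3.CX[OF c1, of 0 1] by simp
  define G where "G = place2 (ctrl2 U') 1 2"
  have Gc: "G \<in> carrier_mat 27 27" unfolding G_def place2_def by simp
  have Ge: "G $$ (x,y) = (if x div 9 mod 3 = y div 9 mod 3 \<and> x div 3 mod 3 = y div 3 mod 3 then
     (if y div 3 mod 3 = 2 then U' $$ (x mod 3, y mod 3) else if x mod 3 = y mod 3 then 1 else 0) else 0)"
    if "x < 27" "y < 27" for x y
    unfolding G_def by (rule G_entry[OF that])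
  have "emulates 3 ((PP * PP) * G * PP) (CC_gate U)"
    unfolding emulates_def
  proof (intro conjI allI impI)
    have 27: "(3::nat)^3 = 27" by simp
    show "(PP * PP) * G * PP \<in> carrier_mat (3^3) (3^3)" unfolding 27
      by (rule mult_carrier_mat[OF mult_carrier_mat[OF mult_carrier_mat[OF PP_carrier PP_carrier] Gc] PP_carrier])
    show "CC_gate U \<in> carrier_mat (2^3) (2^3)" unfolding CC_gate_def by simp
    fix i r :: nat assume i: "i < 2^3" and r: "r < 3^3"
    have i8: "i < 8" and r27: "r < 27" using i r by simp_all
    have ql: "q2t 3 i < 27" unfolding q2t3 by simp
    have "((PP * PP) * G * PP) $$ (r, q2t 3 i) = G $$ (gP (gP r), fP (q2t 3 i))"
      using W_entry[OF Gc _ ql] r by simp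
    also have "\<dots> = (\<Sum>j<2^3. if q2t 3 j = r then CC_gate U $$ (j, i) else 0)"
      using en8[OF i8] en27[OF r27]
      apply (elim disjE)
      apply (simp_all add: Ge gP_def fP_def q2t3 sum8 CC_gate_def u)
      apply (use u in simp_all)
      done
    finally show "((PP * PP) * G * PP) $$ (r, q2t 3 i) = (\<Sum>j<2^3. if q2t 3 j = r then CC_gate U $$ (j, i) else 0)" .
  qed
  then have emul: "emulates 3 ((PP * PP) * place2 (ctrl2 U') 1 2 * PP) (CC_gate U)" unfolding G_def .
  have n: "(1::nat) < 3" "(2::nat) < 3" "(1::nat) \<noteq> 2" by simp_all
  show ?thesis
    apply (rule exI[of _ PP])
    apply (rule exI[of _ "PP * PP"])
    apply (rule exI[of _ "1::nat"])
    apply (rule exI[of _ "2::nat"])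
    using c1 c2 n emul by (intro conjI)
qed

end
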